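(* Let $M,K$ be real symmetric positive definite $N\times N$ matrices, $\Delta t>0$, and let $(q_n)_{n\ge0}$ satisfy the implicit Euler recursion $(M+\Delta tK)q_{n+1}=Mq_n+\Delta t f_{n+1}$, i.e. $(\frac{M}{\Delta t}+K)q_{n+1}=\frac M{\Delta t}q_n+f_{n+1}$, for given vectors $f_{n+1}\in\mathbb{R}^N$. Write $\|q\|_\zeta^2:=q^T(\frac M{\Delta t}+K)q$ and $\|f\|_{H^{-1}(\Omega)}:=\sqrt{f^TK^{-1}f}$. Then for every $n\ge0$, $$\|q_{n+1}\|_\zeta\le\|q_n\|_\zeta+\|f_{n+1}\|_{H^{-1}(\Omega)}.$$
   Context: In the paper $M$ and $K$ are the finite-element mass and stiffness matrices $M_{ij}=\int_\Omega\varphi_i\varphi_j\mu$, $K_{ij}=\int_\Omega(\nabla\varphi_i)^Ta\nabla\varphi_j$ of a parabolic problem $\mu\partial_tu-\mathrm{div}(a\nabla u)=g$ with $f_{n,i}=\int_\Omega\varphi_ig(\cdot,n\Delta t)$; only their symmetry and positive definiteness are used. *)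

theory Defs
  imports "HOL-Analysis.Analysis"
begin

definition sym_pos_def_mat :: "real^'n^'n \<Rightarrow> bool" where
  "sym_pos_def_mat A \<longleftrightarrow> transpose A = A \<and> (\<forall>x. x \<noteq> 0 \<longrightarrow> x \<bullet> (A *v x) > 0)"

definition zeta_norm :: "real^'n^'n \<Rightarrow> real^'n^'n \<Rightarrow> real \<Rightarrow> real^'n \<Rightarrow> real" where
  "zeta_norm M K dt q = sqrt (q \<bullet> (((1 / dt) *\<^sub>R M + K) *v q))"

definition Hm1_norm :: "real^'n^'n \<Rightarrow> real^'n \<Rightarrow> real" where
  "Hm1_norm K f = sqrt (f \<bullet> (matrix_inv K *v f))"

end

theory Submission
  imports Defs
begin

lemma bil_sym:
  fixes B :: "real^'n^'n"
  assumes "transpose B = B"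
  shows "x \<bullet> (B *v y) = y \<bullet> (B *v x)"
proof -
  have "x \<bullet> (B *v y) = (x v* B) \<bullet> y" by (simp add: dot_lmul_matrix)
  also have "x v* B = transpose B *v x" by simp
  finally show ?thesis using assms by (simp add: inner_commute)
qed

lemma cs_form:
  fixes B :: "real^'n^'n"
  assumes sym: "transpose B = B" and psd: "\<And>z. 0 \<le> z \<bullet> (B *v z)"
  shows "x \<bullet> (B *v y) \<le> sqrt (x \<bullet> (B *v x)) * sqrt (y \<bullet> (B *v y))"
proof -
  define a where "a = x \<bullet> (B *v x)"
  define b where "b = x \<bullet> (B *v y)"
  define c where "c = y \<bullet> (B *v y)"
  have yx: "y \<bullet> (B *v x) = b" unfolding b_def using bil_sym[OF sym] by metis
  have q: "0 \<le> a + 2 * t * b + t^2 * c" for t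
  proof -
    have "0 \<le> (x + t *\<^sub>R y) \<bullet> (B *v (x + t *\<^sub>R y))" by (rule psd)
    also have "\<dots> = a + t * b + t * (y \<bullet> (B *v x)) + t^2 * c"
      by (simp add: a_def b_def c_def matrix_vector_right_distrib matrix_vector_mult_scaleR
          inner_add_left inner_add_right power2_eq_square algebra_simps)
    finally show ?thesis using yx by (simp add: algebra_simps)
  qed
  have a0: "0 \<le> a" and c0: "0 \<le> c" using psd a_def c_def by auto
  have "b^2 \<le> a * c"
  proof (cases "c = 0")
    case True
    have "b = 0"
    proof (rule ccontr)
      assume "b \<noteq> 0"
      have "0 \<le> a + 2 * (-(a+1)/(2*b)) * b" using q[of "-(a+1)/(2*b)"] True by simp
      with \<open>b \<noteq> 0\<close> show False by (simp add: field_simps)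
    qed
    then show ?thesis using True by simp
  next
    case False
    hence cp: "c > 0" using c0 by simp
    have "0 \<le> a + 2 * (-b/c) * b + (-b/c)^2 * c" by (rule q)
    hence "0 \<le> a - b^2 / c" using cp by (simp add: power2_eq_square field_simps)
    thus ?thesis using cp by (simp add: field_simps)
  qed
  hence "\<bar>b\<bar> \<le> sqrt (a*c)" using real_le_rsqrt by (metis real_sqrt_abs real_sqrt_le_mono)
  hence "b \<le> sqrt a * sqrt c" by (simp add: real_sqrt_mult)
  thus ?thesis by (simp add: a_def b_def c_def)
qed

theorem mainTheorem3:
  fixes M K :: "real^'n^'n" and dt :: real
    and q f :: "nat \<Rightarrow> real^'n"
  assumes "sym_pos_def_mat M" and "sym_pos_def_mat K" and "dt > 0"
    and "\<And>n. (M + dt *\<^sub>R K) *v q (Suc n) = M *v q n + dt *\<^sub>R f (Suc n)"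
  shows "zeta_norm M K dt (q (Suc n)) \<le> zeta_norm M K dt (q n) + Hm1_norm K (f (Suc n))"
proof -
  define A where "A = (1 / dt) *\<^sub>R M + K"
  define x where "x = q (Suc n)"
  define y where "y = q n"
  define g where "g = f (Suc n)"
  have symM: "transpose M = M" and pdM: "\<And>z. z \<noteq> 0 \<Longrightarrow> z \<bullet> (M *v z) > 0"
    using assms(1) unfolding sym_pos_def_mat_def by auto
  have symK: "transpose K = K" and pdK: "\<And>z. z \<noteq> 0 \<Longrightarrow> z \<bullet> (K *v z) > 0"
    using assms(2) unfolding sym_pos_def_mat_def by auto
  have psdM: "0 \<le> z \<bullet> (M *v z)" for z using pdM[of z] by (cases "z = 0") auto
  have psdK: "0 \<le> z \<bullet> (K *v z)" for z using pdK[of z] by (cases "z = 0") auto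
  define Md where "Md = (1/dt) *\<^sub>R M"
  have symMd: "transpose Md = Md" using symM unfolding Md_def
    by (simp add: transpose_def vec_eq_iff)
  have Mdv: "Md *v z = (1/dt) *\<^sub>R (M *v z)" for z
    unfolding Md_def by (simp add: matrix_vector_mult_def vec_eq_iff sum_distrib_left algebra_simps)
  have psdMd: "0 \<le> z \<bullet> (Md *v z)" for z using psdM[of z] assms(3) by (simp add: Mdv)
  have Av: "A *v z = Md *v z + K *v z" for z
    unfolding A_def Md_def by (simp add: matrix_vector_mult_def vec_eq_iff sum.distrib algebra_simps)
  have eq: "A *v x = Md *v y + g"
  proof -
    have "(M + dt *\<^sub>R K) *v x = M *v y + dt *\<^sub>R g" using assms(4) x_def y_def g_def by simp
    hence "(1/dt) *\<^sub>R ((M + dt *\<^sub>R K) *v x) = (1/dt) *\<^sub>R (M *v y + dt *\<^sub>R g)" by simp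
    moreover have "(M + dt *\<^sub>R K) *v x = M *v x + dt *\<^sub>R (K *v x)"
      by (simp add: matrix_vector_mult_def vec_eq_iff sum.distrib sum_distrib_left algebra_simps)
    ultimately show ?thesis using assms(3) by (simp add: Av Mdv scaleR_add_right)
  qed
  have "\<exists>B. B ** K = mat 1"
    unfolding matrix_left_invertible_ker using pdK by fastforce
  hence invK: "invertible K" using invertible_left_inverse by blast
  hence KK: "K ** matrix_inv K = mat 1"
    unfolding invertible_def matrix_inv_def by (metis (mono_tags, lifting) someI_ex)
  define h where "h = matrix_inv K *v g"
  have Kh: "K *v h = g" unfolding h_def
    by (simp add: matrix_vector_mul_assoc KK)
  have psdA: "0 \<le> z \<bullet> (A *v z)" for z
    using psdMd[of z] psdK[of z] by (simp add: Av inner_add_right)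
  have gpos: "0 \<le> g \<bullet> (matrix_inv K *v g)"
  proof -
    have "h \<bullet> (K *v h) = g \<bullet> (matrix_inv K *v g)" using Kh unfolding h_def by (simp add: inner_commute)
    thus ?thesis using psdK[of h] by simp
  qed
  define nx where "nx = sqrt (x \<bullet> (A *v x))"
  define ny where "ny = sqrt (y \<bullet> (A *v y))"
  define ng where "ng = sqrt (g \<bullet> (matrix_inv K *v g))"
  have nx0: "0 \<le> nx" and ny0: "0 \<le> ny" unfolding nx_def ny_def by (auto simp: psdA)
  have sqx: "nx^2 = x \<bullet> (A *v x)" unfolding nx_def using psdA[of x] by simp
  have "x \<bullet> (A *v x) = x \<bullet> (Md *v y) + x \<bullet> g" by (simp add: eq inner_add_right)
  also have "x \<bullet> (Md *v y) \<le> sqrt (x \<bullet> (Md *v x)) * sqrt (y \<bullet> (Md *v y))"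
    by (rule cs_form[OF symMd psdMd])
  also have "\<dots> \<le> nx * ny"
    unfolding nx_def ny_def
    by (intro mult_mono real_sqrt_le_mono) (auto simp: Av inner_add_right psdK psdMd psdA)
  also have "x \<bullet> g = x \<bullet> (K *v h)" by (simp add: Kh)
  also have "\<dots> \<le> sqrt (x \<bullet> (K *v x)) * sqrt (h \<bullet> (K *v h))"
    by (rule cs_form[OF symK psdK])
  also have "\<dots> \<le> nx * ng"
  proof -
    have "h \<bullet> (K *v h) = g \<bullet> (matrix_inv K *v g)" using Kh unfolding h_def by (simp add: inner_commute)
    moreover have "sqrt (x \<bullet> (K *v x)) \<le> nx"
      unfolding nx_def by (intro real_sqrt_le_mono) (auto simp: Av inner_add_right psdMd)
    ultimately show ?thesis unfolding ng_def by (metis mult_right_mono real_sqrt_ge_zero psdK)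
  qed
  finally have "nx^2 \<le> nx * (ny + ng)" using sqx by (simp add: algebra_simps)
  hence "nx \<le> ny + ng"
    using nx0 by (cases "nx = 0") (auto simp: power2_eq_square ng_def ny_def psdA gpos)
  thus ?thesis unfolding zeta_norm_def Hm1_norm_def nx_def ny_def ng_def A_def x_def y_def g_def .
qed

end
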